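(* (i) For all integers $j\geq 3$, $R_1^{\mathcal{BIP}}(3,j)=j$. (ii) For all integers $i\geq 5$ and $j\geq 3$, $R_1^{\mathcal{BIP}}(i,j)=2j-1$. Here $\mathcal{BIP}$ is the class of bipartite graphs.
   Context: All graphs are finite and simple. For a graph $G$ and a nonnegative integer $k$, a $k$-sparse $j$-set is a set of $j$ vertices of $G$ inducing a subgraph of maximum degree at most $k$; a $k$-dense $i$-set is a set of $i$ vertices of $G$ that is $k$-sparse in the complement of $G$. For a graph class $\mathcal{G}$, $R_k^{\mathcal{G}}(i,j)$ is the smallest natural number $n$ such that every graph on $n$ vertices in $\mathcal{G}$ has either a $k$-dense $i$-set or a $k$-sparse $j$-set. *)

theory Defs
  imports Main
begin

definition simple_graph :: "'a set \<Rightarrow> ('a \<Rightarrow> 'a \<Rightarrow> bool) \<Rightarrow> bool" where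
  "simple_graph V E \<longleftrightarrow> finite V \<and>
     (\<forall>x y. E x y \<longrightarrow> x \<in> V \<and> y \<in> V \<and> x \<noteq> y \<and> E y x)"

definition bipartite :: "'a set \<Rightarrow> ('a \<Rightarrow> 'a \<Rightarrow> bool) \<Rightarrow> bool" where
  "bipartite V E \<longleftrightarrow> (\<exists>A. A \<subseteq> V \<and> (\<forall>x y. E x y \<longrightarrow> (x \<in> A \<longleftrightarrow> y \<notin> A)))"

definition k_sparse :: "('a \<Rightarrow> 'a \<Rightarrow> bool) \<Rightarrow> nat \<Rightarrow> 'a set \<Rightarrow> bool" where
  "k_sparse E k S \<longleftrightarrow> (\<forall>v\<in>S. card {u\<in>S. E v u} \<le> k)"

definition compl_graph :: "('a \<Rightarrow> 'a \<Rightarrow> bool) \<Rightarrow> 'a \<Rightarrow> 'a \<Rightarrow> bool" where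
  "compl_graph E x y \<longleftrightarrow> x \<noteq> y \<and> \<not> E x y"

definition k_dense :: "('a \<Rightarrow> 'a \<Rightarrow> bool) \<Rightarrow> nat \<Rightarrow> 'a set \<Rightarrow> bool" where
  "k_dense E k S \<longleftrightarrow> k_sparse (compl_graph E) k S"

definition has_sparse_set :: "'a set \<Rightarrow> ('a \<Rightarrow> 'a \<Rightarrow> bool) \<Rightarrow> nat \<Rightarrow> nat \<Rightarrow> bool" where
  "has_sparse_set V E k j \<longleftrightarrow> (\<exists>S\<subseteq>V. card S = j \<and> k_sparse E k S)"

definition has_dense_set :: "'a set \<Rightarrow> ('a \<Rightarrow> 'a \<Rightarrow> bool) \<Rightarrow> nat \<Rightarrow> nat \<Rightarrow> bool" where
  "has_dense_set V E k i \<longleftrightarrow> (\<exists>S\<subseteq>V. card S = i \<and> k_dense E k S)"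

text \<open>R_k^BIP(i,j): least n such that every bipartite graph on n vertices
(w.l.o.g. on the vertex set {0..<n}) has a k-dense i-set or a k-sparse j-set.\<close>
definition ramsey_bip :: "nat \<Rightarrow> nat \<Rightarrow> nat \<Rightarrow> nat" where
  "ramsey_bip k i j = (LEAST n. \<forall>E :: nat \<Rightarrow> nat \<Rightarrow> bool.
      simple_graph {0..<n} E \<and> bipartite {0..<n} E \<longrightarrow>
      has_dense_set {0..<n} E k i \<or> has_sparse_set {0..<n} E k j)"

end

theory Submission
  imports Defs
begin

definition Kab :: "nat \<Rightarrow> nat \<Rightarrow> nat \<Rightarrow> nat \<Rightarrow> bool" where
  "Kab a n x y \<longleftrightarrow> x < n \<and> y < n \<and> (x < a \<longleftrightarrow> \<not> y < a)"

lemma card_split: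
  assumes "finite S"
  shows "card S = card {x\<in>S. P x} + card {x\<in>S. \<not> P x}"
proof -
  have "S = {x\<in>S. P x} \<union> {x\<in>S. \<not> P x}" by auto
  then have "card S = card ({x\<in>S. P x} \<union> {x\<in>S. \<not> P x})" by simp
  also have "\<dots> = card {x\<in>S. P x} + card {x\<in>S. \<not> P x}"
    by (rule card_Un_disjoint) (use assms in auto)
  finally show ?thesis .
qed

lemma sub_single_card: "A \<subseteq> {c} \<Longrightarrow> card A \<le> 1"
  by (cases "A = {}") (auto simp: subset_singleton_iff)

lemma Kab_simple: "simple_graph {0..<n} (Kab a n)"
  unfolding simple_graph_def Kab_def by auto

lemma Kab_bip: "bipartite {0..<n} (Kab a n)"
  unfolding bipartite_def Kab_def
  by (rule exI[of _ "{0..<min a n}"]) auto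

lemma side_bound:
  assumes S: "S \<subseteq> {0..<n}" and d: "k_dense (Kab a n) 1 S"
    and side: "\<And>x y. x \<in> S \<Longrightarrow> y \<in> S \<Longrightarrow> Q x \<Longrightarrow> Q y \<Longrightarrow> (x < a \<longleftrightarrow> y < a)"
  shows "card {x\<in>S. Q x} \<le> 2"
proof (rule ccontr)
  have fin: "finite S" using S finite_subset by blast
  assume "\<not> ?thesis"
  hence c: "card {x\<in>S. Q x} \<ge> 3" by simp
  hence "{x\<in>S. Q x} \<noteq> {}" by (metis card.empty not_numeral_le_zero)
  then obtain x where x: "x \<in> S" "Q x" by auto
  have "{x\<in>S. Q x} - {x} \<subseteq> {u\<in>S. compl_graph (Kab a n) x u}"
  proof
    fix y assume y: "y \<in> {x\<in>S. Q x} - {x}"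
    then have y1: "y \<in> S" "Q y" "y \<noteq> x" by auto
    then have "x < a \<longleftrightarrow> y < a" using side[OF x(1) y1(1) x(2) y1(2)] by blast
    then show "y \<in> {u\<in>S. compl_graph (Kab a n) x u}" using y1
      by (auto simp: compl_graph_def Kab_def)
  qed
  hence "card ({x\<in>S. Q x} - {x}) \<le> card {u\<in>S. compl_graph (Kab a n) x u}"
    by (rule card_mono[rotated]) (use fin in auto)
  moreover have "card ({x\<in>S. Q x} - {x}) \<ge> 2" using c x fin by (simp add: card_Diff_singleton)
  moreover have "card {u\<in>S. compl_graph (Kab a n) x u} \<le> 1"
    using d x unfolding k_dense_def k_sparse_def by auto
  ultimately show False by linarith
qed

lemma Kab_no_dense:
  assumes S: "S \<subseteq> {0..<n}" and d: "k_dense (Kab a n) 1 S"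
  shows "card S \<le> 4"
proof -
  have fin: "finite S" using S finite_subset by blast
  have L: "card {x\<in>S. x < a} \<le> 2" by (rule side_bound[OF S d, where Q="\<lambda>x. x < a"]) simp
  have R: "card {x\<in>S. \<not> x < a} \<le> 2" by (rule side_bound[OF S d, where Q="\<lambda>x. \<not> x < a"]) simp
  show ?thesis using card_split[OF fin, of "\<lambda>x. x < a"] L R by linarith
qed

lemma Kab_no_sparse:
  assumes S: "S \<subseteq> {0..<n}" and sp: "k_sparse (Kab a n) 1 S"
    and a: "a \<le> j - 1" and na: "n - a \<le> j - 1" and j: "j \<ge> 3"
  shows "card S \<noteq> j"
proof -
  have fin: "finite S" using S finite_subset by blast
  let ?L = "{x\<in>S. x < a}" and ?R = "{x\<in>S. \<not> x < a}"
  have split: "card S = card ?L + card ?R" by (rule card_split[OF fin])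
  show ?thesis
  proof (cases "?L = {}")
    case True
    then have "S \<subseteq> {a..<n}" using S by (force simp: subset_iff)
    then have "card S \<le> card {a..<n}" by (rule card_mono[rotated]) auto
    then show ?thesis using na j by auto
  next
    case Lne: False
    show ?thesis
    proof (cases "?R = {}")
      case True
      then have "S \<subseteq> {0..<a}" using S by (force simp: subset_iff)
      then have "card S \<le> card {0..<a}" by (rule card_mono[rotated]) auto
      then show ?thesis using a j by auto
    next
      case False
      then obtain y where y: "y \<in> S" "\<not> y < a" by auto
      from Lne obtain x where x: "x \<in> S" "x < a" by auto
      have "?R \<subseteq> {u\<in>S. Kab a n x u}" using x S by (auto simp: Kab_def)
      hence "card ?R \<le> card {u\<in>S. Kab a n x u}" by (rule card_mono[rotated]) (use fin in auto)
      moreover have "card {u\<in>S. Kab a n x u} \<le> 1" using sp x unfolding k_sparse_def by auto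
      moreover have "?L \<subseteq> {u\<in>S. Kab a n y u}" using y S by (auto simp: Kab_def)
      hence "card ?L \<le> card {u\<in>S. Kab a n y u}" by (rule card_mono[rotated]) (use fin in auto)
      moreover have "card {u\<in>S. Kab a n y u} \<le> 1" using sp y unfolding k_sparse_def by auto
      ultimately show ?thesis using split j by linarith
    qed
  qed
qed

lemma empty_no_dense3:
  assumes S: "S \<subseteq> {0..<(n::nat)}" and c: "card S = 3" and d: "k_dense (\<lambda>x y. False) 1 S"
  shows False
proof -
  have fin: "finite S" using S finite_subset by blast
  have "S \<noteq> {}" using c by (metis card.empty zero_neq_numeral)
  then obtain x where x: "x \<in> S" by blast
  have eq: "{u\<in>S. compl_graph (\<lambda>x y. False) x u} = S - {x}" by (auto simp: compl_graph_def)
  have c2: "card (S - {x}) = 2" using c x fin by (simp add: card_Diff_singleton)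
  have "card {u\<in>S. compl_graph (\<lambda>x y. False) x u} \<le> 1"
    using d x unfolding k_dense_def k_sparse_def by blast
  then show False unfolding eq c2 by simp
qed

lemma part1:
  assumes j: "j \<ge> 3"
  shows "ramsey_bip 1 3 j = j"
  unfolding ramsey_bip_def
proof (rule Least_equality)
  show "\<forall>E. simple_graph {0..<j} E \<and> bipartite {0..<j} E \<longrightarrow>
      has_dense_set {0..<j} E 1 3 \<or> has_sparse_set {0..<j} E 1 j"
  proof (intro allI impI)
    fix E assume h: "simple_graph {0..<j} E \<and> bipartite {0..<j} E"
    have sg: "\<And>x y. E x y \<Longrightarrow> x \<in> {0..<j} \<and> y \<in> {0..<j} \<and> x \<noteq> y \<and> E y x"
      using h unfolding simple_graph_def by blast
    show "has_dense_set {0..<j} E 1 3 \<or> has_sparse_set {0..<j} E 1 j"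
    proof (cases "\<forall>v\<in>{0..<j}. card {u\<in>{0..<j}. E v u} \<le> 1")
      case True
      then have "has_sparse_set {0..<j} E 1 j" unfolding has_sparse_set_def k_sparse_def
        by (intro exI[of _ "{0..<j}"]) auto
      then show ?thesis by blast
    next
      case False
      then obtain v where v: "v < j" "card {u\<in>{0..<j}. E v u} \<ge> 2" by auto
      let ?N = "{u\<in>{0..<j}. E v u}"
      have finN: "finite ?N" by auto
      have "?N \<noteq> {}" using v(2) by (metis card.empty not_numeral_le_zero)
      then obtain a where a: "a \<in> ?N" by blast
      have "card (?N - {a}) \<ge> 1" using v(2) a finN by (simp add: card_Diff_singleton)
      hence "?N - {a} \<noteq> {}" by (metis card.empty not_one_le_zero)
      then obtain b where b: "b \<in> ?N" "b \<noteq> a" by blast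
      have va: "v \<noteq> a" "E a v" using sg a by auto
      have vb: "v \<noteq> b" "E b v" using sg b by auto
      have "has_dense_set {0..<j} E 1 3" unfolding has_dense_set_def
      proof (intro exI[of _ "{v,a,b}"] conjI)
        show "{v,a,b} \<subseteq> {0..<j}" using a b v by auto
        show "card {v,a,b} = 3" using va vb b by auto
        show "k_dense E 1 {v,a,b}" unfolding k_dense_def k_sparse_def
        proof
          fix w assume w: "w \<in> {v,a,b}"
          have "{u\<in>{v,a,b}. compl_graph E w u} \<subseteq> {if w = a then b else a}"
            using w a b va vb by (auto simp: compl_graph_def)
          then show "card {u\<in>{v,a,b}. compl_graph E w u} \<le> 1" by (rule sub_single_card)
        qed
      qed
      then show ?thesis by blast
    qed
  qed
next
  fix m :: nat assume Pm: "\<forall>E. simple_graph {0..<m} E \<and> bipartite {0..<m} E \<longrightarrow>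
      has_dense_set {0..<m} E 1 3 \<or> has_sparse_set {0..<m} E 1 j"
  show "j \<le> m"
  proof (rule ccontr)
    assume "\<not> j \<le> m"
    have "simple_graph {0..<m} (\<lambda>x y. False)" by (simp add: simple_graph_def)
    moreover have "bipartite {0..<m} (\<lambda>x y. False)" unfolding bipartite_def by blast
    ultimately have "has_dense_set {0..<m} (\<lambda>x y. False) 1 3 \<or> has_sparse_set {0..<m} (\<lambda>x y. False) 1 j"
      using Pm by blast
    then show False
    proof
      assume "has_dense_set {0..<m} (\<lambda>x y. False) 1 3"
      then show False using empty_no_dense3 unfolding has_dense_set_def by blast
    next
      assume "has_sparse_set {0..<m} (\<lambda>x y. False) 1 j"
      then obtain S where "S \<subseteq> {0..<m}" "card S = j" unfolding has_sparse_set_def by blast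
      then have "j \<le> card {0..<m}" by (metis card_mono finite_atLeastLessThan)
      then show False using \<open>\<not> j \<le> m\<close> by simp
    qed
  qed
qed

lemma part2:
  assumes i: "i \<ge> 5" and j: "j \<ge> 3"
  shows "ramsey_bip 1 i j = 2 * j - 1"
  unfolding ramsey_bip_def
proof (rule Least_equality)
  show "\<forall>E. simple_graph {0..<2*j-1} E \<and> bipartite {0..<2*j-1} E \<longrightarrow>
      has_dense_set {0..<2*j-1} E 1 i \<or> has_sparse_set {0..<2*j-1} E 1 j"
  proof (intro allI impI)
    fix E assume h: "simple_graph {0..<2*j-1} E \<and> bipartite {0..<2*j-1} E"
    let ?V = "{0..<2*j-1}"
    obtain A where A: "\<forall>x y. E x y \<longrightarrow> (x \<in> A \<longleftrightarrow> y \<notin> A)"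
      using h unfolding bipartite_def by blast
    have cs: "card ?V = card {x\<in>?V. x \<in> A} + card {x\<in>?V. x \<notin> A}"
      by (rule card_split) simp
    have "\<exists>T. T \<subseteq> ?V \<and> j \<le> card T \<and> (\<forall>x\<in>T. \<forall>y\<in>T. \<not> E x y)"
    proof (cases "j \<le> card {x\<in>?V. x \<in> A}")
      case True
      then show ?thesis using A by (intro exI[of _ "{x\<in>?V. x \<in> A}"]) auto
    next
      case False
      then have "j \<le> card {x\<in>?V. x \<notin> A}" using cs j by simp
      then show ?thesis using A by (intro exI[of _ "{x\<in>?V. x \<notin> A}"]) auto
    qed
    then obtain T where T: "T \<subseteq> ?V" "j \<le> card T" "\<forall>x\<in>T. \<forall>y\<in>T. \<not> E x y" by blast
    obtain U where U: "U \<subseteq> T" "card U = j" using obtain_subset_with_card_n[OF T(2)] by blast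
    have emp: "\<forall>v\<in>U. {u\<in>U. E v u} = {}" using U T by blast
    have "has_sparse_set ?V E 1 j" unfolding has_sparse_set_def k_sparse_def
    proof (intro exI[of _ U] conjI ballI)
      show "U \<subseteq> ?V" using U T by blast
      show "card U = j" using U by simp
      fix v assume vU: "v \<in> U"
      from emp vU have e0: "{u\<in>U. E v u} = {}" by (rule bspec)
      show "card {u\<in>U. E v u} \<le> 1" unfolding e0 by simp
    qed
    then show "has_dense_set ?V E 1 i \<or> has_sparse_set ?V E 1 j" by blast
  qed
next
  fix m :: nat assume Pm: "\<forall>E. simple_graph {0..<m} E \<and> bipartite {0..<m} E \<longrightarrow>
      has_dense_set {0..<m} E 1 i \<or> has_sparse_set {0..<m} E 1 j"
  show "2 * j - 1 \<le> m"
  proof (rule ccontr)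
    assume m: "\<not> 2 * j - 1 \<le> m"
    define a where "a = m div 2"
    have a1: "a \<le> j - 1" unfolding a_def using m by linarith
    have a2: "m - a \<le> j - 1" unfolding a_def using m by linarith
    have sb: "simple_graph {0..<m} (Kab a m) \<and> bipartite {0..<m} (Kab a m)"
      using Kab_simple Kab_bip by blast
    have "has_dense_set {0..<m} (Kab a m) 1 i \<or> has_sparse_set {0..<m} (Kab a m) 1 j"
      using Pm[rule_format, OF sb] .
    then show False
    proof
      assume "has_dense_set {0..<m} (Kab a m) 1 i"
      then obtain S where S: "S \<subseteq> {0..<m}" "card S = i" "k_dense (Kab a m) 1 S"
        unfolding has_dense_set_def by blast
      have "card S \<le> 4" by (rule Kab_no_dense[OF S(1) S(3)])
      then show False using S(2) i by linarith
    next
      assume "has_sparse_set {0..<m} (Kab a m) 1 j"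
      then obtain S where S: "S \<subseteq> {0..<m}" "card S = j" "k_sparse (Kab a m) 1 S"
        unfolding has_sparse_set_def by blast
      have "card S \<noteq> j" by (rule Kab_no_sparse[OF S(1) S(3) a1 a2 j])
      then show False using S(2) by simp
    qed
  qed
qed

theorem theorem5p2:
  shows "(\<forall>j::nat. j \<ge> 3 \<longrightarrow> ramsey_bip 1 3 j = j) \<and>
         (\<forall>i j::nat. i \<ge> 5 \<longrightarrow> j \<ge> 3 \<longrightarrow> ramsey_bip 1 i j = 2 * j - 1)"
  using part1 part2 by blast

end
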